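(* If $f\colon Z\to X$ is a max-min Milyutin map of compact Hausdorff spaces, then $J(f)\colon J(Z)\to J(X)$ is surjective.
   Context: A max-min measure on a compact Hausdorff space $X$ is a functional $\mu\colon C(X)\to\mathbb R$ (not assumed continuous) such that $\mu(c_X)=c$ for constants $c$, $\mu(\varphi\vee\psi)=\mu(\varphi)\vee\mu(\psi)$, and $\mu(c\wedge\varphi)=c\wedge\mu(\varphi)$ for $c\in\mathbb R$. $J(X)$ is the set of max-min measures with the topology of pointwise convergence on $C(X)$; for continuous $f\colon X\to Y$, $J(f)(\mu)(\varphi)=\mu(\varphi\circ f)$. For a closed subset $A\subset X$, $J(A)$ is identified with $J(i)(J(A))\subset J(X)$, $i\colon A\to X$ the inclusion. A continuous surjection $f\colon Z\to X$ is a max-min Milyutin map if there is a continuous $s\colon X\to J(Z)$ with $s(x)\in J(f^{-1}(x))$ for every $x\in X$. *)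

theory Defs
  imports "HOL-Analysis.Analysis"
begin

text \<open>C(X): continuous real functions on the space X, made extensional
  (value undefined outside topspace X), so that functions are identified
  exactly when they agree on X.\<close>
definition Cfun :: "'a topology \<Rightarrow> ('a \<Rightarrow> real) set" where
  "Cfun X = {\<phi>. continuous_map X euclideanreal \<phi> \<and> \<phi> \<in> extensional (topspace X)}"

definition const_fun :: "'a topology \<Rightarrow> real \<Rightarrow> ('a \<Rightarrow> real)" where
  "const_fun X c = restrict (\<lambda>_. c) (topspace X)"

definition max_fun :: "'a topology \<Rightarrow> ('a \<Rightarrow> real) \<Rightarrow> ('a \<Rightarrow> real) \<Rightarrow> ('a \<Rightarrow> real)" where
  "max_fun X \<phi> \<psi> = restrict (\<lambda>x. max (\<phi> x) (\<psi> x)) (topspace X)"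

definition min_const :: "'a topology \<Rightarrow> real \<Rightarrow> ('a \<Rightarrow> real) \<Rightarrow> ('a \<Rightarrow> real)" where
  "min_const X c \<phi> = restrict (\<lambda>x. min c (\<phi> x)) (topspace X)"

text \<open>Max-min measures on X (functionals on C(X), not assumed continuous),
  made extensional on C(X) so that they are points of the product space R^{C(X)}.\<close>
definition maxmin_measures :: "'a topology \<Rightarrow> (('a \<Rightarrow> real) \<Rightarrow> real) set" where
  "maxmin_measures X = {\<mu>. \<mu> \<in> extensional (Cfun X)
     \<and> (\<forall>c. \<mu> (const_fun X c) = c)
     \<and> (\<forall>\<phi>\<in>Cfun X. \<forall>\<psi>\<in>Cfun X. \<mu> (max_fun X \<phi> \<psi>) = max (\<mu> \<phi>) (\<mu> \<psi>))
     \<and> (\<forall>c. \<forall>\<phi>\<in>Cfun X. \<mu> (min_const X c \<phi>) = min c (\<mu> \<phi>))}"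

definition Jtop :: "'a topology \<Rightarrow> (('a \<Rightarrow> real) \<Rightarrow> real) topology" where
  "Jtop X = subtopology (product_topology (\<lambda>_. euclideanreal) (Cfun X)) (maxmin_measures X)"

definition Jmap :: "'a topology \<Rightarrow> 'b topology \<Rightarrow> ('a \<Rightarrow> 'b)
    \<Rightarrow> (('a \<Rightarrow> real) \<Rightarrow> real) \<Rightarrow> (('b \<Rightarrow> real) \<Rightarrow> real)" where
  "Jmap X Y f \<mu> = restrict (\<lambda>\<phi>. \<mu> (restrict (\<phi> \<circ> f) (topspace X))) (Cfun Y)"

text \<open>J(A) for a closed A \<subseteq> X, identified with J(i)(J(A)) \<subseteq> J(X).\<close>
definition J_sub :: "'a topology \<Rightarrow> 'a set \<Rightarrow> (('a \<Rightarrow> real) \<Rightarrow> real) set" where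
  "J_sub X A = Jmap (subtopology X A) X id ` maxmin_measures (subtopology X A)"

definition maxmin_Milyutin :: "'a topology \<Rightarrow> 'b topology \<Rightarrow> ('a \<Rightarrow> 'b) \<Rightarrow> bool" where
  "maxmin_Milyutin Z X f \<longleftrightarrow> continuous_map Z X f \<and> f ` topspace Z = topspace X \<and>
     (\<exists>s. continuous_map X (Jtop Z) s \<and>
          (\<forall>x\<in>topspace X. s x \<in> J_sub Z {z \<in> topspace Z. f z = x}))"

end

theory Submission
  imports Defs
begin

lemma Cfun_restrict:
  assumes "continuous_map X euclideanreal g"
  shows "restrict g (topspace X) \<in> Cfun X"
  unfolding Cfun_def using assms
  by (auto intro: continuous_map_eq[OF assms])

lemma Cfun_contD: "\<phi> \<in> Cfun X \<Longrightarrow> continuous_map X euclideanreal \<phi>"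
  by (simp add: Cfun_def)

lemma Cfun_comp:
  assumes "\<phi> \<in> Cfun X" "continuous_map Z X f"
  shows "restrict (\<phi> \<circ> f) (topspace Z) \<in> Cfun Z"
  by (rule Cfun_restrict) (meson assms Cfun_contD continuous_map_compose)

lemma const_Cfun: "const_fun X c \<in> Cfun X"
  unfolding const_fun_def by (rule Cfun_restrict) simp

lemma max_Cfun: "\<phi> \<in> Cfun X \<Longrightarrow> \<psi> \<in> Cfun X \<Longrightarrow> max_fun X \<phi> \<psi> \<in> Cfun X"
  unfolding max_fun_def by (rule Cfun_restrict) (intro continuous_map_real_max Cfun_contD)

lemma min_Cfun: "\<phi> \<in> Cfun X \<Longrightarrow> min_const X c \<phi> \<in> Cfun X"
  unfolding min_const_def by (rule Cfun_restrict) (intro continuous_map_real_min Cfun_contD continuous_map_const[THEN iffD2]; simp)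

lemma Cfun_ext: "\<phi> \<in> Cfun X \<Longrightarrow> restrict \<phi> (topspace X) = \<phi>"
  by (simp add: Cfun_def extensional_restrict)

theorem mainTheorem8:
  fixes Z :: "'a topology" and X :: "'b topology" and f :: "'a \<Rightarrow> 'b"
  assumes "compact_space Z" "Hausdorff_space Z"
    and "compact_space X" "Hausdorff_space X"
    and "maxmin_Milyutin Z X f"
  shows "Jmap Z X f ` maxmin_measures Z = maxmin_measures X"
proof -
  have fc: "continuous_map Z X f" and fs: "f ` topspace Z = topspace X"
    using assms(5) by (auto simp: maxmin_Milyutin_def)
  obtain s where sc: "continuous_map X (Jtop Z) s"
    and sJ: "\<And>x. x\<in>topspace X \<Longrightarrow> s x \<in> J_sub Z {z \<in> topspace Z. f z = x}"
    using assms(5) unfolding maxmin_Milyutin_def by blast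
  have fm: "\<And>z. z \<in> topspace Z \<Longrightarrow> f z \<in> topspace X"
    using continuous_map_image_subset_topspace[OF fc] by (simp add: image_subset_iff)
  show ?thesis
  proof
    show "Jmap Z X f ` maxmin_measures Z \<subseteq> maxmin_measures X"
    proof
      fix \<nu> assume "\<nu> \<in> Jmap Z X f ` maxmin_measures Z"
      then obtain \<mu> where mu: "\<mu> \<in> maxmin_measures Z" and nu: "\<nu> = Jmap Z X f \<mu>" by blast
      have m1: "\<And>c. \<mu> (const_fun Z c) = c"
        and m2: "\<And>\<phi> \<psi>. \<phi>\<in>Cfun Z \<Longrightarrow> \<psi>\<in>Cfun Z \<Longrightarrow> \<mu> (max_fun Z \<phi> \<psi>) = max (\<mu> \<phi>) (\<mu> \<psi>)"
        and m3: "\<And>c \<phi>. \<phi>\<in>Cfun Z \<Longrightarrow> \<mu> (min_const Z c \<phi>) = min c (\<mu> \<phi>)"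
        using mu by (auto simp: maxmin_measures_def)
      let ?p = "\<lambda>\<phi>. restrict (\<phi> \<circ> f) (topspace Z)"
      have nuv: "\<And>\<phi>. \<phi> \<in> Cfun X \<Longrightarrow> \<nu> \<phi> = \<mu> (?p \<phi>)"
        by (simp add: nu Jmap_def)
      have "\<nu> (const_fun X c) = c" for c
      proof -
        have "?p (const_fun X c) = const_fun Z c"
          by (auto simp: const_fun_def fm)
        then show ?thesis using nuv[OF const_Cfun] m1 by simp
      qed
      moreover have "\<nu> (max_fun X \<phi> \<psi>) = max (\<nu> \<phi>) (\<nu> \<psi>)" if "\<phi>\<in>Cfun X" "\<psi>\<in>Cfun X" for \<phi> \<psi>
      proof -
        have "?p (max_fun X \<phi> \<psi>) = max_fun Z (?p \<phi>) (?p \<psi>)"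
          by (auto simp: max_fun_def fm)
        then show ?thesis using nuv[OF max_Cfun[OF that]] nuv that m2 Cfun_comp[OF _ fc] by simp
      qed
      moreover have "\<nu> (min_const X c \<phi>) = min c (\<nu> \<phi>)" if "\<phi>\<in>Cfun X" for c \<phi>
      proof -
        have "?p (min_const X c \<phi>) = min_const Z c (?p \<phi>)"
          by (auto simp: min_const_def fm)
        then show ?thesis using nuv[OF min_Cfun[OF that]] nuv that m3 Cfun_comp[OF _ fc] by simp
      qed
      moreover have "\<nu> \<in> extensional (Cfun X)" by (simp add: nu Jmap_def)
      ultimately show "\<nu> \<in> maxmin_measures X" by (simp add: maxmin_measures_def)
    qed
  next
    show "maxmin_measures X \<subseteq> Jmap Z X f ` maxmin_measures Z"
    proof
      fix \<nu> assume nuM: "\<nu> \<in> maxmin_measures X"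
      have n1: "\<And>c. \<nu> (const_fun X c) = c"
        and n2: "\<And>\<phi> \<psi>. \<phi>\<in>Cfun X \<Longrightarrow> \<psi>\<in>Cfun X \<Longrightarrow> \<nu> (max_fun X \<phi> \<psi>) = max (\<nu> \<phi>) (\<nu> \<psi>)"
        and n3: "\<And>c \<phi>. \<phi>\<in>Cfun X \<Longrightarrow> \<nu> (min_const X c \<phi>) = min c (\<nu> \<phi>)"
        and n4: "\<nu> \<in> extensional (Cfun X)"
        using nuM by (auto simp: maxmin_measures_def)
      have sM: "\<And>x. x \<in> topspace X \<Longrightarrow> s x \<in> maxmin_measures Z"
        using sc unfolding continuous_map_def Jtop_def by auto
      have sp: "continuous_map X (product_topology (\<lambda>_. euclideanreal) (Cfun Z)) s"
        using sc unfolding Jtop_def by (simp add: continuous_map_in_subtopology)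
      have scomp: "continuous_map X euclideanreal (\<lambda>x. s x \<phi>)" if "\<phi> \<in> Cfun Z" for \<phi>
        using continuous_map_compose[OF sp continuous_map_product_projection[OF that, of "\<lambda>_. euclideanreal"]]
        by (simp add: o_def)
      define g where "g \<phi> = restrict (\<lambda>x. s x \<phi>) (topspace X)" for \<phi>
      have gC: "\<And>\<phi>. \<phi> \<in> Cfun Z \<Longrightarrow> g \<phi> \<in> Cfun X"
        unfolding g_def by (rule Cfun_restrict, rule scomp)
      define \<mu> where "\<mu> = restrict (\<lambda>\<phi>. \<nu> (g \<phi>)) (Cfun Z)"
      have "\<mu> (const_fun Z c) = c" for c
      proof -
        have "g (const_fun Z c) = const_fun X c"
          using sM by (auto simp: g_def const_fun_def maxmin_measures_def)
        then show ?thesis using n1 const_Cfun[of Z c] by (simp add: \<mu>_def)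
      qed
      moreover have "\<mu> (max_fun Z \<phi> \<psi>) = max (\<mu> \<phi>) (\<mu> \<psi>)" if "\<phi>\<in>Cfun Z" "\<psi>\<in>Cfun Z" for \<phi> \<psi>
      proof -
        have "g (max_fun Z \<phi> \<psi>) = max_fun X (g \<phi>) (g \<psi>)"
          using sM that by (auto simp: g_def max_fun_def maxmin_measures_def)
        then show ?thesis using n2 gC that max_Cfun[OF that] by (simp add: \<mu>_def)
      qed
      moreover have "\<mu> (min_const Z c \<phi>) = min c (\<mu> \<phi>)" if "\<phi>\<in>Cfun Z" for c \<phi>
      proof -
        have "g (min_const Z c \<phi>) = min_const X c (g \<phi>)"
          using sM that by (auto simp: g_def min_const_def maxmin_measures_def)
        then show ?thesis using n3 gC that min_Cfun[OF that] by (simp add: \<mu>_def)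
      qed
      moreover have "\<mu> \<in> extensional (Cfun Z)" by (simp add: \<mu>_def)
      ultimately have muM: "\<mu> \<in> maxmin_measures Z" by (simp add: maxmin_measures_def)
      have key: "s x (restrict (\<phi> \<circ> f) (topspace Z)) = \<phi> x"
        if x: "x \<in> topspace X" and ph: "\<phi> \<in> Cfun X" for x \<phi>
      proof -
        define A where "A = {z \<in> topspace Z. f z = x}"
        obtain la where lm: "la \<in> maxmin_measures (subtopology Z A)"
          and sx: "s x = Jmap (subtopology Z A) Z id la"
          using sJ[OF x] unfolding J_sub_def A_def by blast
        have tA: "topspace (subtopology Z A) = A" by (auto simp: A_def)
        have "s x (restrict (\<phi> \<circ> f) (topspace Z))
              = la (restrict (restrict (\<phi> \<circ> f) (topspace Z) \<circ> id) A)"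
          using Cfun_comp[OF ph fc] by (simp add: sx Jmap_def tA)
        also have "restrict (restrict (\<phi> \<circ> f) (topspace Z) \<circ> id) A = const_fun (subtopology Z A) (\<phi> x)"
          by (auto simp: const_fun_def tA A_def)
        also have "la \<dots> = \<phi> x" using lm by (simp add: maxmin_measures_def)
        finally show ?thesis .
      qed
      have "Jmap Z X f \<mu> = \<nu>"
      proof
        fix \<phi>
        show "Jmap Z X f \<mu> \<phi> = \<nu> \<phi>"
        proof (cases "\<phi> \<in> Cfun X")
          case True
          have "g (restrict (\<phi> \<circ> f) (topspace Z)) = restrict \<phi> (topspace X)"
            using key True by (auto simp: g_def)
          then show ?thesis using True Cfun_comp[OF True fc] Cfun_ext[OF True]
            by (simp add: Jmap_def \<mu>_def)
        next
          case False
          then show ?thesis using n4 by (simp add: Jmap_def extensional_def)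
        qed
      qed
      then show "\<nu> \<in> Jmap Z X f ` maxmin_measures Z" using muM by blast
    qed
  qed
qed

end
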